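(* Let $n\ge 4$ and let $G$ be a graph having the maximum value of $cM_2$ among all connected graphs of order $n$. Then $|M(G)|<\frac{5352}{10000}n$.
   Context: All graphs are finite and simple. For a graph $G$ and a vertex $u$, $d_u(G)$ denotes the degree of $u$ in $G$. The complementary second Zagreb index of $G$ is $cM_2(G)=\sum_{uv\in E(G)}\left|(d_u(G))^2-(d_v(G))^2\right|$. $M(G)$ denotes the set of vertices of $G$ having the maximum degree of $G$. *)

theory Defs
  imports Complex_Main
begin

definition simple_graph :: "'a set \<Rightarrow> 'a set set \<Rightarrow> bool" where
  "simple_graph V E \<longleftrightarrow> finite V \<and>
     (\<forall>e\<in>E. \<exists>u v. e = {u, v} \<and> u \<noteq> v \<and> u \<in> V \<and> v \<in> V)"

definition degree :: "'a set \<Rightarrow> 'a set set \<Rightarrow> 'a \<Rightarrow> nat" where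
  "degree V E u = card {v\<in>V. {u, v} \<in> E}"

definition connected_graph :: "'a set \<Rightarrow> 'a set set \<Rightarrow> bool" where
  "connected_graph V E \<longleftrightarrow> V \<noteq> {} \<and>
     (\<forall>u\<in>V. \<forall>v\<in>V. (u, v) \<in> {(x, y). {x, y} \<in> E}\<^sup>*)"

text \<open>Complementary second Zagreb index: sum over edges uv of |d_u^2 - d_v^2|.
  The double sum over ordered pairs counts each edge twice, hence the division by 2.\<close>
definition cM2 :: "'a set \<Rightarrow> 'a set set \<Rightarrow> int" where
  "cM2 V E = (\<Sum>u\<in>V. \<Sum>v\<in>V. if {u, v} \<in> E
       then \<bar>(int (degree V E u))^2 - (int (degree V E v))^2\<bar> else 0) div 2"

definition max_deg_vertices :: "'a set \<Rightarrow> 'a set set \<Rightarrow> 'a set" where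
  "max_deg_vertices V E = {v\<in>V. degree V E v = Max (degree V E ` V)}"

end

theory Submission
  imports Defs
begin


lemma poly_pos: fixes p::int assumes "p \<ge> 0" and "a > 0" "b \<ge> 0" "c \<ge> 0" "d \<ge> 0" "e \<ge> 0"
  shows "a + b*p + c*p^2 + d*p^3 + e*p^4 > 0"
proof -
  have "b*p \<ge> 0" "c*p^2 \<ge> 0" "d*p^3\<ge>0" "e*p^4\<ge>0" using assms by simp_all
  then show ?thesis using assms by linarith
qed

lemma key_int:
  fixes n k :: int
  assumes "n \<ge> 4" "n mod 5 = 0 \<and> k = 2*(n div 5) \<or> n mod 5 = 1 \<and> k = 2*(n div 5) \<or> n mod 5 = 2 \<and> k = 2*(n div 5)
     \<or> n mod 5 = 3 \<and> k = 2*(n div 5) + 1 \<or> n mod 5 = 4 \<and> k = 2*(n div 5) + 1"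
  shows "4648*n*(n-1)^3 < 25000*k*(n-k)*((n-1)^2-k^2)"
proof -
  define q where "q = n div 5"
  have nq: "n = 5*q + n mod 5" unfolding q_def by simp
  have q0: "q \<ge> 0" using assms(1) unfolding q_def by simp
  consider "n mod 5 = 0" "k = 2*q" | "n mod 5 = 1" "k = 2*q" | "n mod 5 = 2" "k = 2*q"
     | "n mod 5 = 3" "k = 2*q+1" | "n mod 5 = 4" "k = 2*q+1" using assms(2) q_def by blast
  then show ?thesis
  proof cases
    case 1
    then have q1: "q \<ge> 1" using nq assms(1) by linarith
    define p where "p = q - 1"
    have p0: "p \<ge> 0" using q1 p_def by simp
    have n: "n = 5*p+5" "k = 2*p+2" using nq 1 p_def by simp_all
    have "25000*k*(n-k)*((n-1)^2-k^2) - 4648*n*(n-1)^3 = 312640 + 1335040*p + 2000400*p^2 + 1223000*p^3 + 245000*p^4"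
      unfolding n by (simp add: algebra_simps power2_eq_square power3_eq_cube power4_eq_xxxx)
    moreover have "312640 + 1335040*p + 2000400*p^2 + 1223000*p^3 + 245000*p^4 > 0" by (rule poly_pos[OF p0]) simp_all
    ultimately show ?thesis by linarith
  next
    case 2
    then have q1: "q \<ge> 1" using nq assms(1) by linarith
    define p where "p = q - 1"
    have p0: "p \<ge> 0" using q1 p_def by simp
    have n: "n = 5*p+6" "k = 2*p+2" using nq 2 p_def by simp_all
    have "25000*k*(n-k)*((n-1)^2-k^2) - 4648*n*(n-1)^3 = 714000 + 2387000*p + 2877000*p^2 + 1449000*p^3 + 245000*p^4"
      unfolding n by (simp add: algebra_simps power2_eq_square power3_eq_cube power4_eq_xxxx)
    moreover have "714000 + 2387000*p + 2877000*p^2 + 1449000*p^3 + 245000*p^4 > 0" by (rule poly_pos[OF p0]) simp_all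
    ultimately show ?thesis by linarith
  next
    case 3
    then have q1: "q \<ge> 1" using nq assms(1) by linarith
    define p where "p = q - 1"
    have p0: "p \<ge> 0" using q1 p_def by simp
    have n: "n = 5*p+7" "k = 2*p+2" using nq 3 p_def by simp_all
    have "25000*k*(n-k)*((n-1)^2-k^2) - 4648*n*(n-1)^3 = 972224 + 3210720*p + 3659200*p^2 + 1675000*p^3 + 245000*p^4"
      unfolding n by (simp add: algebra_simps power2_eq_square power3_eq_cube power4_eq_xxxx)
    moreover have "972224 + 3210720*p + 3659200*p^2 + 1675000*p^3 + 245000*p^4 > 0" by (rule poly_pos[OF p0]) simp_all
    ultimately show ?thesis by linarith
  next
    case 4
    then have q1: "q \<ge> 1" using nq assms(1) by linarith
    define p where "p = q - 1"
    have p0: "p \<ge> 0" using q1 p_def by simp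
    have n: "n = 5*p+8" "k = 2*p+3" using nq 4 p_def by simp_all
    have "25000*k*(n-k)*((n-1)^2-k^2) - 4648*n*(n-1)^3 = 2245888 + 5448440*p + 4822000*p^2 + 1826000*p^3 + 245000*p^4"
      unfolding n by (simp add: algebra_simps power2_eq_square power3_eq_cube power4_eq_xxxx)
    moreover have "2245888 + 5448440*p + 4822000*p^2 + 1826000*p^3 + 245000*p^4 > 0" by (rule poly_pos[OF p0]) simp_all
    ultimately show ?thesis by linarith
  next
    case 5
    define p where "p = q"
    have p0: "p \<ge> 0" using q0 p_def by simp
    have n: "n = 5*p+4" "k = 2*p+1" using nq 5 p_def by simp_all
    have "25000*k*(n-k)*((n-1)^2-k^2) - 4648*n*(n-1)^3 = 98016 + 612600*p + 1304400*p^2 + 1072000*p^3 + 245000*p^4"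
      unfolding n by (simp add: algebra_simps power2_eq_square power3_eq_cube power4_eq_xxxx)
    moreover have "98016 + 612600*p + 1304400*p^2 + 1072000*p^3 + 245000*p^4 > 0" by (rule poly_pos[OF p0]) simp_all
    ultimately show ?thesis by linarith
  qed
qed

lemma key_nat:
  fixes n :: nat assumes "n \<ge> 4"
  obtains k :: nat where "1 \<le> k" "k < n" "4648*int n*(int n-1)^3 < 25000*int k*(int n-int k)*((int n-1)^2-(int k)^2)"
proof -
  define k where "k = (if n mod 5 \<le> 2 then 2*(n div 5) else 2*(n div 5)+1)"
  have e: "int n mod 5 = int (n mod 5)" "int n div 5 = int (n div 5)" by (simp_all add: zmod_int zdiv_int)
  have "n mod 5 = 0 \<or> n mod 5 = 1 \<or> n mod 5 = 2 \<or> n mod 5 = 3 \<or> n mod 5 = 4" by arith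
  then have c: "int n mod 5 = 0 \<and> int k = 2*(int n div 5) \<or> int n mod 5 = 1 \<and> int k = 2*(int n div 5) \<or> int n mod 5 = 2 \<and> int k = 2*(int n div 5)
     \<or> int n mod 5 = 3 \<and> int k = 2*(int n div 5) + 1 \<or> int n mod 5 = 4 \<and> int k = 2*(int n div 5) + 1"
    unfolding k_def e by auto
  have "1 \<le> k" "k < n" using assms unfolding k_def by (auto split: if_splits; presburger)+
  moreover have "4648*int n*(int n-1)^3 < 25000*int k*(int n-int k)*((int n-1)^2-(int k)^2)"
    by (rule key_int) (use assms c in auto)
  ultimately show ?thesis using that by blast
qed

lemma scalar_bound:
  fixes d D N :: nat assumes "d \<le> D" "D \<le> N"
  shows "5 * int d * ((int D)^2 - (int d)^2) \<le> 2 * (int N)^3"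
proof -
  have a: "int d * ((int D)^2 - (int d)^2) \<le> int d * ((int N)^2 - (int d)^2)"
    using assms by (intro mult_left_mono) (auto simp: power_mono)
  define a where "a = (int N)^2"
  define b where "b = (int d)^2"
  have ba: "b \<le> a" unfolding a_def b_def using assms by (simp add: power_mono)
  have id: "4*a^3 - 27*b*(a-b)^2 = (a-3*b)^2*(4*a-3*b)"
    by (simp add: algebra_simps power2_eq_square power3_eq_cube)
  have "b \<ge> 0" using b_def by simp
  then have "4*a-3*b \<ge> 0" using ba by linarith
  then have "(a-3*b)^2*(4*a-3*b) \<ge> 0" by simp
  then have "27*b*(a-b)^2 \<le> 4*a^3" using id by linarith
  moreover have "b*(a-b)^2 \<ge> 0" unfolding b_def by simp
  ultimately have "25*b*(a-b)^2 \<le> 4*a^3" by linarith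
  then have "(5 * int d * ((int N)^2 - (int d)^2))^2 \<le> (2 * (int N)^3)^2"
    unfolding a_def b_def by (simp add: algebra_simps power2_eq_square power3_eq_cube)
  then have "5 * int d * ((int N)^2 - (int d)^2) \<le> 2 * (int N)^3"
    by (rule power2_le_imp_le) simp
  then show ?thesis using a by linarith
qed



lemma deg_le:
  assumes "simple_graph V E" "u \<in> V"
  shows "degree V E u \<le> card V - 1"
proof -
  have f: "finite V" using assms unfolding simple_graph_def by simp
  have "{v\<in>V. {u, v} \<in> E} \<subseteq> V - {u}"
  proof
    fix v assume "v \<in> {v\<in>V. {u, v} \<in> E}"
    then have "v \<in> V" "{u,v} \<in> E" by auto
    then obtain a b where "{u,v} = {a,b}" "a \<noteq> b" using assms unfolding simple_graph_def by blast
    then have "u \<noteq> v" by (metis doubleton_eq_iff)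
    then show "v \<in> V - {u}" using \<open>v \<in> V\<close> by simp
  qed
  then have "card {v\<in>V. {u, v} \<in> E} \<le> card (V - {u})" using f by (intro card_mono) auto
  then show ?thesis unfolding degree_def using assms f by simp
qed

lemma upper_T:
  assumes "simple_graph V E"
  defines "D \<equiv> Max (degree V E ` V)"
  shows "cM2 V E \<le> (\<Sum>u\<in>V. int (degree V E u) * ((int D)^2 - (int (degree V E u))^2))"
proof -
  let ?d = "degree V E"
  have f: "finite V" using assms unfolding simple_graph_def by simp
  have dle: "?d u \<le> D" if "u \<in> V" for u unfolding D_def using f that by simp
  define g where "g u v = (if {u,v} \<in> E then (int D)^2 - (int (?d u))^2 else 0)" for u v
  have fg: "(if {u, v} \<in> E then \<bar>(int (?d u))^2 - (int (?d v))^2\<bar> else 0) \<le> g u v + g v u"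
    if "u \<in> V" "v \<in> V" for u v
  proof -
    have "(int (?d u))^2 \<le> (int D)^2" "(int (?d v))^2 \<le> (int D)^2"
      using dle that by (simp_all add: power_mono)
    moreover have "(int (?d u))^2 \<ge> 0" "(int (?d v))^2 \<ge> 0" by simp_all
    ultimately show ?thesis unfolding g_def by (auto simp: insert_commute abs_le_iff)
  qed
  have inner: "(\<Sum>v\<in>V. g u v) = int (?d u) * ((int D)^2 - (int (?d u))^2)" for u
  proof -
    have "(\<Sum>v\<in>V. g u v) = (\<Sum>v\<in>{v\<in>V. {u,v}\<in>E}. (int D)^2 - (int (?d u))^2)"
      unfolding g_def using f by (simp add: sum.If_cases Int_def)
    also have "\<dots> = int (?d u) * ((int D)^2 - (int (?d u))^2)"
      by (simp add: degree_def)
    finally show ?thesis .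
  qed
  define S where "S = (\<Sum>u\<in>V. \<Sum>v\<in>V. if {u, v} \<in> E then \<bar>(int (?d u))^2 - (int (?d v))^2\<bar> else 0)"
  have "S \<le> (\<Sum>u\<in>V. \<Sum>v\<in>V. g u v + g v u)"
    unfolding S_def by (intro sum_mono fg) auto
  also have "\<dots> = (\<Sum>u\<in>V. \<Sum>v\<in>V. g u v) + (\<Sum>u\<in>V. \<Sum>v\<in>V. g v u)"
    by (simp add: sum.distrib)
  also have "(\<Sum>u\<in>V. \<Sum>v\<in>V. g v u) = (\<Sum>u\<in>V. \<Sum>v\<in>V. g u v)"
    by (rule sum.swap)
  finally have "S \<le> 2 * (\<Sum>u\<in>V. int (?d u) * ((int D)^2 - (int (?d u))^2))"
    using inner by simp
  then have "S div 2 \<le> (2 * (\<Sum>u\<in>V. int (?d u) * ((int D)^2 - (int (?d u))^2))) div 2"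
    by (rule zdiv_mono1) simp
  then show ?thesis unfolding cM2_def S_def[symmetric] by simp
qed

lemma upper_bound:
  assumes "simple_graph V E" "card V = n" "V \<noteq> {}"
  shows "5 * cM2 V E \<le> 2 * int (n - card (max_deg_vertices V E)) * (int (n - 1))^3"
proof -
  let ?d = "degree V E"
  define D where "D = Max (?d ` V)"
  let ?M = "max_deg_vertices V E"
  have f: "finite V" using assms unfolding simple_graph_def by simp
  have dle: "?d u \<le> D" if "u \<in> V" for u unfolding D_def using f that by simp
  have "D \<in> ?d ` V" unfolding D_def using f assms(3) by simp
  then have Dle: "D \<le> n - 1" using deg_le[OF assms(1)] assms(2) by auto
  have MV: "?M \<subseteq> V" unfolding max_deg_vertices_def by auto
  have trm: "5 * (int (?d u) * ((int D)^2 - (int (?d u))^2)) \<le> (if u \<in> ?M then 0 else 2 * (int (n - 1))^3)"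
    if "u \<in> V" for u
  proof (cases "u \<in> ?M")
    case True
    then have "?d u = D" unfolding max_deg_vertices_def D_def by simp
    then show ?thesis using True by simp
  next
    case False
    show ?thesis using scalar_bound[OF dle[OF that] Dle] False by simp
  qed
  have "5 * cM2 V E \<le> 5 * (\<Sum>u\<in>V. int (?d u) * ((int D)^2 - (int (?d u))^2))"
    using upper_T[OF assms(1)] unfolding D_def by simp
  also have "\<dots> = (\<Sum>u\<in>V. 5 * (int (?d u) * ((int D)^2 - (int (?d u))^2)))"
    by (simp add: sum_distrib_left)
  also have "\<dots> \<le> (\<Sum>u\<in>V. if u \<in> ?M then 0 else 2 * (int (n - 1))^3)"
    by (intro sum_mono trm)
  also have "\<dots> = int (card (V - ?M)) * (2 * (int (n - 1))^3)"
    using f by (simp add: sum.If_cases Diff_eq)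
  also have "card (V - ?M) = n - card ?M"
    using f MV assms(2) by (simp add: card_Diff_subset finite_subset)
  finally show ?thesis by (simp add: algebra_simps)
qed



lemma split_graph:
  assumes f: "finite V" and KV: "K \<subseteq> V" and k1: "card K \<ge> 1" and kn: "card K < n" and cV: "card V = n"
  defines "E' \<equiv> {{a,b} | a b. a \<in> K \<and> b \<in> V \<and> a \<noteq> b}"
  shows "simple_graph V E'" "connected_graph V E'"
    "cM2 V E' = int (card K) * int (n - card K) * ((int (n-1))^2 - (int (card K))^2)"
proof -
  let ?k = "card K"
  show sg: "simple_graph V E'" unfolding simple_graph_def E'_def using f KV by blast
  have fK: "finite K" using f KV finite_subset by blast
  obtain a where aK: "a \<in> K" using k1 by (metis card.empty ex_in_conv not_one_le_zero)
  have edge: "{x, a} \<in> E'" "{a, x} \<in> E'" if "x \<in> V" "x \<noteq> a" for x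
    unfolding E'_def using aK that by (auto simp: insert_commute)
  let ?R = "{(x, y). {x, y} \<in> E'}"
  have ra: "(x, a) \<in> ?R\<^sup>*" "(a, x) \<in> ?R\<^sup>*" if "x \<in> V" for x
    using edge[OF that] by (cases "x = a"; auto)+
  show "connected_graph V E'" unfolding connected_graph_def
    using ra aK KV by (meson rtrancl_trans subsetD empty_iff)
  have dK: "degree V E' u = n - 1" if "u \<in> K" for u
  proof -
    have "{v\<in>V. {u, v} \<in> E'} = V - {u}"
      unfolding E'_def using that KV by (auto simp: doubleton_eq_iff)
    then show ?thesis unfolding degree_def using that KV cV f by auto
  qed
  have dN: "degree V E' u = ?k" if "u \<in> V - K" for u
  proof -
    have "{v\<in>V. {u, v} \<in> E'} = K"
      unfolding E'_def using that KV by (auto simp: doubleton_eq_iff)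
    then show ?thesis unfolding degree_def by simp
  qed
  define X where "X = (int (n-1))^2 - (int ?k)^2"
  have X0: "X \<ge> 0" unfolding X_def using kn by (simp add: power_mono)
  have inK: "u \<in> K \<or> v \<in> K" if "{u,v} \<in> E'" for u v
    using that unfolding E'_def by (auto simp: doubleton_eq_iff)
  define F where "F u v = (if {u, v} \<in> E' then \<bar>(int (degree V E' u))^2 - (int (degree V E' v))^2\<bar> else 0)" for u v
  have F1: "F u v = (if v \<in> K then 0 else X)" if "u \<in> K" "v \<in> V" for u v
  proof (cases "v \<in> K")
    case True then show ?thesis using that dK F_def by simp
  next
    case False
    then have "{u,v} \<in> E'" unfolding E'_def using that by blast
    then show ?thesis using False that dK dN X0 unfolding F_def X_def by simp
  qed
  have F2: "F u v = (if v \<in> K then X else 0)" if "u \<in> V - K" "v \<in> V" for u v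
  proof (cases "v \<in> K")
    case True
    then have "{u,v} \<in> E'" unfolding E'_def using that by (auto simp: insert_commute)
    then show ?thesis using True that dK dN X0 unfolding F_def X_def by (simp add: abs_minus_commute)
  next
    case False
    then show ?thesis using that inK unfolding F_def by auto
  qed
  have fVK: "finite (V - K)" using f by simp
  have inner: "(\<Sum>v\<in>V. F u v) = (if u \<in> K then int (n - ?k) * X else int ?k * X)" if "u \<in> V" for u
  proof (cases "u \<in> K")
    case True
    have "(\<Sum>v\<in>V. F u v) = (\<Sum>v\<in>V. if v \<in> K then 0 else X)" using F1 True by (intro sum.cong) auto
    also have "\<dots> = int (card (V - K)) * X" using f by (simp add: sum.If_cases Diff_eq)
    finally show ?thesis using True KV cV f by (simp add: card_Diff_subset fK)
  next
    case False
    have "(\<Sum>v\<in>V. F u v) = (\<Sum>v\<in>V. if v \<in> K then X else 0)" using F2 False that by (intro sum.cong) auto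
    also have "\<dots> = int ?k * X" using f KV by (simp add: sum.If_cases Int_absorb1 Int_absorb2)
    finally show ?thesis using False by simp
  qed
  have "(\<Sum>u\<in>V. \<Sum>v\<in>V. F u v) = (\<Sum>u\<in>V. if u \<in> K then int (n - ?k) * X else int ?k * X)"
    using inner by (intro sum.cong) auto
  also have "\<dots> = int ?k * (int (n - ?k) * X) + int (card (V - K)) * (int ?k * X)"
    using f KV by (simp add: sum.If_cases Int_absorb1 Int_absorb2 Diff_eq)
  also have "\<dots> = 2 * (int ?k * int (n - ?k) * X)"
    using KV cV f by (simp add: card_Diff_subset fK algebra_simps)
  finally have "(\<Sum>u\<in>V. \<Sum>v\<in>V. F u v) = 2 * (int ?k * int (n - ?k) * X)" .
  then show "cM2 V E' = int (card K) * int (n - card K) * ((int (n-1))^2 - (int (card K))^2)"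
    unfolding cM2_def F_def[symmetric] X_def by simp
qed


theorem corollary1:
  fixes V :: "'a set" and E :: "'a set set" and n :: nat
  assumes "n \<ge> 4"
    and "simple_graph V E" and "connected_graph V E" and "card V = n"
    and "\<And>(V' :: 'a set) (E' :: 'a set set). simple_graph V' E' \<Longrightarrow> connected_graph V' E' \<Longrightarrow> card V' = n
           \<Longrightarrow> cM2 V' E' \<le> cM2 V E"
  shows "real (card (max_deg_vertices V E)) < 5352 / 10000 * real n"
proof (rule ccontr)
  assume neg: "\<not> ?thesis"
  let ?m = "card (max_deg_vertices V E)"
  have f: "finite V" using assms(2) unfolding simple_graph_def by simp
  have Vne: "V \<noteq> {}" using assms(1,4) by auto
  obtain k where k: "1 \<le> k" "k < n"
    "4648*int n*(int n-1)^3 < 25000*int k*(int n-int k)*((int n-1)^2-(int k)^2)"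
    using key_nat[OF assms(1)] by blast
  obtain K where K: "K \<subseteq> V" "card K = k"
    using obtain_subset_with_card_n[of k V] k assms(4) by auto
  define E' where "E' = {{a,b} | a b. a \<in> K \<and> b \<in> V \<and> a \<noteq> b}"
  have sp: "simple_graph V E'" "connected_graph V E'"
    "cM2 V E' = int k * int (n - k) * ((int (n-1))^2 - (int k)^2)"
    using split_graph[OF f K(1) _ _ assms(4)] K k unfolding E'_def by auto
  have low: "int k * (int n - int k) * ((int n - 1)^2 - (int k)^2) \<le> cM2 V E"
    using assms(5)[OF sp(1,2) assms(4)] sp(3) k assms(1) by (simp add: of_nat_diff)
  have up: "5 * cM2 V E \<le> 2 * int (n - ?m) * (int (n - 1))^3"
    by (rule upper_bound[OF assms(2,4) Vne])
  have "max_deg_vertices V E \<subseteq> V" unfolding max_deg_vertices_def by blast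
  then have mV: "?m \<le> n" using assms(4) f card_mono by metis
  have "5352 * real n \<le> 10000 * real ?m" using neg by simp
  then have mm: "5352 * int n \<le> 10000 * int ?m" by linarith
  have c3: "(int n - 1)^3 \<ge> 0" using assms(1) by simp
  have "10000 * int (n - ?m) \<le> 4648 * int n" using mm mV by (simp add: of_nat_diff)
  then have A: "10000 * int (n - ?m) * (int n - 1)^3 \<le> 4648 * int n * (int n - 1)^3"
    using c3 by (intro mult_right_mono) auto
  have B: "5 * cM2 V E \<le> 2 * int (n - ?m) * (int n - 1)^3"
    using up assms(1) by (simp add: of_nat_diff)
  show False using A B low k(3) by linarith
qed

end
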